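(* Fix $q,\beta\in[1,\infty)$ and let $(X,d_X)$ be a $q$-barycentric metric space with constant $\beta$. Then for every $n\in\mathbb{N}$ and every even $m\in 2\mathbb{N}$, every function $f:\mathbb{Z}_{2m}^n\to X$ satisfies $$\Big(\sum_{i=1}^n\sum_{x\in\mathbb{Z}_{2m}^n} d_X\big(f(x+me_i),f(x)\big)^q\Big)^{1/q}\le \big(4n^{1/q}+\beta m\big)\Big(\frac{1}{2^n}\sum_{\varepsilon\in\{-1,1\}^n}\sum_{x\in\mathbb{Z}_{2m}^n} d_X\big(f(x+\varepsilon),f(x)\big)^q\Big)^{1/q}.$$ In particular, if $m\ge \beta^{-1}n^{1/q}$, then the left-hand side is at most $5\beta m$ times the bracketed average on the right (i.e. the metric cotype $q$ inequality holds with constant $\Gamma\le 5\beta$).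
   Context: $\mathbb{Z}_{2m}=\mathbb{Z}/(2m\mathbb{Z})$, additions in arguments of $f$ are modulo $2m$, $e_1,\dots,e_n$ is the standard basis of $\mathbb{Z}_{2m}^n$, and $\varepsilon\in\{-1,1\}^n$ is regarded as an element of $\mathbb{Z}_{2m}^n$. For a set $\Omega$, $\mathscr{P}^{<\infty}_\Omega$ denotes the finitely supported probability measures on $\Omega$; a barycenter map is $\mathfrak{B}:\mathscr{P}^{<\infty}_\Omega\to\Omega$ with $\mathfrak{B}(\delta_x)=x$. For $q\in[1,\infty)$, $\beta>0$, a metric space $(X,d_X)$ is $q$-barycentric with constant $\beta$ if there is a barycenter map $\mathfrak{B}:\mathscr{P}^{<\infty}_X\to X$ with $d_X(\mathfrak{B}(\mu),x)^q+\beta^{-q}\int_X d_X(\mathfrak{B}(\mu),y)^q\,d\mu(y)\le\int_X d_X(x,y)^q\,d\mu(y)$ for all $x\in X$, $\mu\in\mathscr{P}^{<\infty}_X$. *)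

theory Defs
  imports "HOL-Probability.Probability"
begin

text \<open>q-barycentric metric spaces. A finitely supported probability measure is a pmf
with finite support; the barycenter map B only matters on those.\<close>
definition q_barycentric :: "real \<Rightarrow> real \<Rightarrow> ('a::metric_space pmf \<Rightarrow> 'a) \<Rightarrow> bool" where
  "q_barycentric q \<beta> B \<longleftrightarrow>
     (\<forall>x. B (return_pmf x) = x) \<and>
     (\<forall>\<mu> x. finite (set_pmf \<mu>) \<longrightarrow>
        dist (B \<mu>) x powr q + \<beta> powr (-q) * measure_pmf.expectation \<mu> (\<lambda>y. dist (B \<mu>) y powr q)
          \<le> measure_pmf.expectation \<mu> (\<lambda>y. dist x y powr q))"

text \<open>The discrete torus (Z_M)^n, elements represented as functions nat => int with
coordinates i < n in {0..<M} and all other coordinates 0.\<close>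
definition torus :: "nat \<Rightarrow> int \<Rightarrow> (nat \<Rightarrow> int) set" where
  "torus n M = {x. (\<forall>i<n. 0 \<le> x i \<and> x i < M) \<and> (\<forall>i\<ge>n. x i = 0)}"

text \<open>Addition in (Z_M)^n (the second argument may be any integer vector, e.g. m e_i or a sign vector).\<close>
definition tadd :: "nat \<Rightarrow> int \<Rightarrow> (nat \<Rightarrow> int) \<Rightarrow> (nat \<Rightarrow> int) \<Rightarrow> (nat \<Rightarrow> int)" where
  "tadd n M x y = (\<lambda>i. if i < n then (x i + y i) mod M else 0)"

definition unitvec :: "nat \<Rightarrow> (nat \<Rightarrow> int)" where
  "unitvec i = (\<lambda>j. if j = i then 1 else 0)"

definition signs :: "nat \<Rightarrow> (nat \<Rightarrow> int) set" where
  "signs n = {\<epsilon>. (\<forall>i<n. \<epsilon> i = -1 \<or> \<epsilon> i = 1) \<and> (\<forall>i\<ge>n. \<epsilon> i = 0)}"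

end

theory Submission
  imports Defs
begin


lemma powr_convex0:
  assumes "p \<ge> (1::real)" shows "convex_on {0..} (\<lambda>x. x powr p)"
proof (rule convex_on_linorderI)
  fix t x y :: real
  assume t: "0 < t" "t < 1" and xy: "x \<in> {0..}" "y \<in> {0..}" "x < y"
  show "((1 - t) *\<^sub>R x + t *\<^sub>R y) powr p \<le> (1 - t) * x powr p + t * y powr p"
  proof (cases "x = 0")
    case True
    have "t powr p \<le> t powr 1" using t assms by (intro powr_mono') auto
    hence "(t * y) powr p \<le> t * y powr p" using t xy by (simp add: powr_mult)
    thus ?thesis using True assms by simp
  next
    case False
    hence "x > 0" "y > 0" using xy by auto
    thus ?thesis using convex_onD[OF powr_convex[OF assms], of t x y] t by auto
  qed
qed (simp add: convex_real_interval)

lemma weighted_power_mean: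
  fixes a w :: "'b \<Rightarrow> real" and q :: real
  assumes "finite J" "q \<ge> 1" "\<And>j. j \<in> J \<Longrightarrow> w j > 0" "sum w J = 1"
    "\<And>j. j \<in> J \<Longrightarrow> a j \<ge> 0"
  shows "(sum a J) powr q \<le> (\<Sum>j\<in>J. w j powr (1 - q) * a j powr q)"
proof -
  have ne: "J \<noteq> {}" using assms(4) by auto
  have e: "sum a J = (\<Sum>j\<in>J. w j *\<^sub>R (a j / w j))"
    using assms(3) by (intro sum.cong) (auto simp: less_imp_neq[symmetric])
  have "(\<Sum>j\<in>J. w j *\<^sub>R (a j / w j)) powr q \<le> (\<Sum>j\<in>J. w j * (a j / w j) powr q)"
    using assms by (intro convex_on_sum[OF assms(1) ne powr_convex0[OF assms(2)]])
       (auto simp: less_imp_le)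
  hence "(sum a J) powr q \<le> (\<Sum>j\<in>J. w j * (a j / w j) powr q)" using e by simp
  also have "\<dots> = (\<Sum>j\<in>J. w j powr (1 - q) * a j powr q)"
  proof (intro sum.cong refl)
    fix j assume "j \<in> J"
    hence "w j > 0" "a j \<ge> 0" using assms by auto
    thus "w j * (a j / w j) powr q = w j powr (1 - q) * a j powr q"
      by (simp add: powr_divide powr_diff)
  qed
  finally show ?thesis .
qed

lemma power_mean_card:
  fixes a :: "'b \<Rightarrow> real" and q :: real
  assumes "finite J" "J \<noteq> {}" "q \<ge> 1" "\<And>j. j \<in> J \<Longrightarrow> a j \<ge> 0"
  shows "(sum a J) powr q \<le> real (card J) powr (q - 1) * (\<Sum>j\<in>J. a j powr q)"
proof -
  have c: "card J > 0" using assms by (simp add: card_gt_0_iff)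
  have "(sum a J) powr q \<le> (\<Sum>j\<in>J. (1 / real (card J)) powr (1 - q) * a j powr q)"
    using assms c by (intro weighted_power_mean) auto
  also have "\<dots> = real (card J) powr (q - 1) * (\<Sum>j\<in>J. a j powr q)"
    using c by (simp add: sum_distrib_left powr_divide powr_diff)
  finally show ?thesis .
qed



lemma tadd_torus: "M > 0 \<Longrightarrow> tadd n M x v \<in> torus n M"
  by (auto simp: tadd_def torus_def)

lemma tadd_tadd: "tadd n M (tadd n M x u) v = tadd n M x (\<lambda>i. u i + v i)"
  by (auto simp: tadd_def fun_eq_iff mod_add_left_eq add.assoc)

lemma tadd_cong: "(\<And>i. i < n \<Longrightarrow> u i = v i) \<Longrightarrow> tadd n M x u = tadd n M x v"
  by (auto simp: tadd_def fun_eq_iff)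

lemma tadd_id: "x \<in> torus n M \<Longrightarrow> (\<And>i. i < n \<Longrightarrow> v i = 0) \<Longrightarrow> tadd n M x v = x"
  by (auto simp: tadd_def fun_eq_iff torus_def)

lemma torus_eq: "torus n M = (\<lambda>g i. if i < n then g i else 0) ` PiE {..<n} (\<lambda>_. {0..<M})"
proof (intro equalityI subsetI)
  fix x assume x: "x \<in> torus n M"
  let ?g = "\<lambda>i. if i < n then x i else undefined"
  have mem: "?g \<in> PiE {..<n} (\<lambda>_. {0..<M})"
  proof (rule PiE_I)
    fix i assume "i \<in> {..<n}" thus "?g i \<in> {0..<M}" using x by (simp add: torus_def)
  qed simp
  show "x \<in> (\<lambda>g i. if i < n then g i else 0) ` PiE {..<n} (\<lambda>_. {0..<M})"
    by (rule image_eqI[where x = ?g, OF _ mem]) (use x in \<open>auto simp: torus_def fun_eq_iff\<close>)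
next
  fix x assume "x \<in> (\<lambda>g i. if i < n then g i else 0) ` PiE {..<n} (\<lambda>_. {0..<M})"
  then obtain g where g: "g \<in> PiE {..<n} (\<lambda>_. {0..<M})" and x: "x = (\<lambda>i. if i < n then g i else 0)" by blast
  have "g i \<in> {0..<M}" if "i < n" for i using PiE_mem[OF g] that by auto
  thus "x \<in> torus n M" using x by (auto simp: torus_def)
qed

lemma finite_torus: "finite (torus n M)"
  unfolding torus_eq by (intro finite_imageI finite_PiE) auto

lemma signs_eq: "signs n = (\<lambda>g i. if i < n then g i else 0) ` PiE {..<n} (\<lambda>_. {-1,1})"
proof (intro equalityI subsetI)
  fix x assume x: "x \<in> signs n"
  let ?g = "\<lambda>i. if i < n then x i else undefined"
  have mem: "?g \<in> PiE {..<n} (\<lambda>_. {-1::int,1})"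
  proof (rule PiE_I)
    fix i assume "i \<in> {..<n}" thus "?g i \<in> {-1::int,1}" using x by (simp add: signs_def)
  qed simp
  show "x \<in> (\<lambda>g i. if i < n then g i else 0) ` PiE {..<n} (\<lambda>_. {-1::int,1})"
    by (rule image_eqI[where x = ?g, OF _ mem]) (use x in \<open>auto simp: signs_def fun_eq_iff\<close>)
next
  fix x assume "x \<in> (\<lambda>g i. if i < n then g i else 0) ` PiE {..<n} (\<lambda>_. {-1::int,1})"
  then obtain g where g: "g \<in> PiE {..<n} (\<lambda>_. {-1::int,1})" and x: "x = (\<lambda>i. if i < n then g i else 0)" by blast
  have "g i \<in> {-1::int,1}" if "i < n" for i using PiE_mem[OF g] that by auto
  thus "x \<in> signs n" using x by (auto simp: signs_def)
qed

lemma finite_signs: "finite (signs n)"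
  unfolding signs_eq by (intro finite_imageI finite_PiE) auto

lemma card_signs: "card (signs n) = 2 ^ n"
proof -
  have "inj_on (\<lambda>g i. if i < n then g i else (0::int)) (PiE {..<n} (\<lambda>_. {-1,1}))"
  proof (rule inj_onI)
    fix g h assume g: "g \<in> PiE {..<n} (\<lambda>_. {-1::int,1})" and h: "h \<in> PiE {..<n} (\<lambda>_. {-1::int,1})"
      and e: "(\<lambda>i. if i < n then g i else 0) = (\<lambda>i. if i < n then h i else 0)"
    show "g = h"
    proof
      fix i show "g i = h i"
      proof (cases "i < n")
        case True thus ?thesis using fun_cong[OF e, of i] by simp
      next
        case False thus ?thesis using g h by (auto simp: PiE_def extensional_def)
      qed
    qed
  qed
  hence "card (signs n) = card (PiE {..<n} (\<lambda>_. {-1::int,1}))"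
    unfolding signs_eq by (rule card_image)
  also have "\<dots> = 2 ^ n" by (simp add: card_PiE numeral_2_eq_2)
  finally show ?thesis .
qed

lemma sum_torus_shift:
  assumes "M > 0"
  shows "(\<Sum>x\<in>torus n M. g (tadd n M x v)) = (\<Sum>x\<in>torus n M. g x)"
proof (rule sum.reindex_bij_witness[where j = "\<lambda>x. tadd n M x v" and i = "\<lambda>x. tadd n M x (\<lambda>i. - v i)"])
  fix x assume "x \<in> torus n M"
  thus "tadd n M (tadd n M x (\<lambda>i. - v i)) v = x"
    by (simp add: tadd_tadd tadd_id)
next
  fix x assume "x \<in> torus n M"
  thus "tadd n M (tadd n M x v) (\<lambda>i. - v i) = x"
    by (simp add: tadd_tadd tadd_id)
next
  fix x show "tadd n M x v \<in> torus n M" by (rule tadd_torus[OF assms])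
next
  fix x show "tadd n M x (\<lambda>i. - v i) \<in> torus n M" by (rule tadd_torus[OF assms])
qed simp

definition sv :: "nat \<Rightarrow> int \<Rightarrow> nat \<Rightarrow> int" where "sv k s = (\<lambda>i. if i = k then s else 0)"
definition trunc :: "nat \<Rightarrow> (nat \<Rightarrow> int) \<Rightarrow> nat \<Rightarrow> int" where "trunc k e = (\<lambda>i. if i < k then e i else 0)"

lemma signs_flip_sum:
  fixes G :: "(nat \<Rightarrow> int) \<Rightarrow> real"
  assumes "k < n"
  shows "(\<Sum>e\<in>signs n. (\<Sum>s\<in>{-1,1}. G (\<lambda>i. trunc k e i + sv k s i)) / 2) = (\<Sum>e\<in>signs n. G (trunc (Suc k) e))"
proof -
  let ?fl = "\<lambda>e::nat\<Rightarrow>int. e(k := - e k)"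
  have t1: "trunc (Suc k) e = (\<lambda>i. trunc k e i + sv k (e k) i)" for e
    by (auto simp: trunc_def sv_def fun_eq_iff)
  have fl_in: "?fl e \<in> signs n" if "e \<in> signs n" for e using that assms unfolding signs_def by auto
  have "(\<Sum>e\<in>signs n. G (trunc (Suc k) e)) = (\<Sum>e\<in>signs n. G (trunc (Suc k) (?fl e)))"
    by (rule sum.reindex_bij_witness[where i = ?fl and j = ?fl]) (simp_all add: fl_in)
  also have "\<dots> = (\<Sum>e\<in>signs n. G (\<lambda>i. trunc k e i + sv k (- e k) i))"
    by (intro sum.cong refl arg_cong[where f=G]) (auto simp: trunc_def sv_def fun_eq_iff)
  finally have 2: "(\<Sum>e\<in>signs n. G (trunc (Suc k) e)) = (\<Sum>e\<in>signs n. G (\<lambda>i. trunc k e i + sv k (- e k) i))" .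
  have "(\<Sum>e\<in>signs n. (\<Sum>s\<in>{-1,1}. G (\<lambda>i. trunc k e i + sv k s i)) / 2)
      = (\<Sum>e\<in>signs n. (G (trunc (Suc k) e) + G (\<lambda>i. trunc k e i + sv k (- e k) i)) / 2)"
  proof (intro sum.cong refl)
    fix e assume "e \<in> signs n"
    hence "e k = -1 \<or> e k = 1" using assms by (auto simp: signs_def)
    thus "(\<Sum>s\<in>{-1,1}. G (\<lambda>i. trunc k e i + sv k s i)) / 2 = (G (trunc (Suc k) e) + G (\<lambda>i. trunc k e i + sv k (- e k) i)) / 2"
      unfolding t1 by auto
  qed
  also have "\<dots> = (\<Sum>e\<in>signs n. G (trunc (Suc k) e))"
    using 2 by (simp add: sum_divide_distrib[symmetric] sum.distrib)
  finally show ?thesis .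
qed



lemma powr_weight_id:
  fixes a s q :: real assumes "a > 0" "s > 0"
  shows "(a / s) powr (1 - q) * a powr q = s powr (q - 1) * a"
proof -
  have "(a / s) powr (1 - q) * a powr q = a powr (1 - q) * a powr q / s powr (1 - q)"
    using assms by (simp add: powr_divide)
  also have "a powr (1 - q) * a powr q = a" using assms by (simp add: powr_add[symmetric])
  also have "a / s powr (1 - q) = s powr (q - 1) * a" using assms by (simp add: powr_diff powr_minus divide_simps)
  finally show ?thesis .
qed

lemma three_mink:
  fixes F u v w :: "'b \<Rightarrow> real" and a b c q :: real
  assumes I: "finite I" and q: "q \<ge> 1"
    and pt: "\<And>i. i \<in> I \<Longrightarrow> F i \<le> u i + v i + w i"
    and nn: "\<And>i. i \<in> I \<Longrightarrow> F i \<ge> 0 \<and> u i \<ge> 0 \<and> v i \<ge> 0 \<and> w i \<ge> 0"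
    and U: "(\<Sum>i\<in>I. u i powr q) \<le> a powr q" and V: "(\<Sum>i\<in>I. v i powr q) \<le> b powr q"
    and W: "(\<Sum>i\<in>I. w i powr q) \<le> c powr q"
    and pos: "a > 0" "b > 0" "c > 0"
  shows "(\<Sum>i\<in>I. F i powr q) \<le> (a + b + c) powr q"
proof -
  define s where "s = a + b + c"
  have s: "s > 0" using pos by (simp add: s_def)
  have ptq: "F i powr q \<le> (a / s) powr (1 - q) * u i powr q + (b / s) powr (1 - q) * v i powr q + (c / s) powr (1 - q) * w i powr q"
    if i: "i \<in> I" for i
  proof -
    have "F i powr q \<le> (u i + v i + w i) powr q" using pt[OF i] nn[OF i] q by (intro powr_mono2) auto
    also have "\<dots> = (\<Sum>j\<in>{0::nat,1,2}. (if j = 0 then u i else if j = 1 then v i else w i)) powr q" by (simp add: add.assoc)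
    also have "\<dots> \<le> (\<Sum>j\<in>{0::nat,1,2}. (if j = 0 then a / s else if j = 1 then b / s else c / s) powr (1 - q) *
                    (if j = 0 then u i else if j = 1 then v i else w i) powr q)"
      using pos s nn[OF i] q by (intro weighted_power_mean) (auto simp: s_def add_divide_distrib[symmetric])
    also have "\<dots> = (a / s) powr (1 - q) * u i powr q + (b / s) powr (1 - q) * v i powr q + (c / s) powr (1 - q) * w i powr q"
      by simp
    finally show ?thesis .
  qed
  have "(\<Sum>i\<in>I. F i powr q) \<le> (\<Sum>i\<in>I. (a / s) powr (1 - q) * u i powr q + (b / s) powr (1 - q) * v i powr q + (c / s) powr (1 - q) * w i powr q)"
    by (intro sum_mono ptq)
  also have "\<dots> = (a / s) powr (1 - q) * (\<Sum>i\<in>I. u i powr q) + (b / s) powr (1 - q) * (\<Sum>i\<in>I. v i powr q) + (c / s) powr (1 - q) * (\<Sum>i\<in>I. w i powr q)"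
    by (simp add: sum.distrib sum_distrib_left)
  also have "\<dots> \<le> (a / s) powr (1 - q) * a powr q + (b / s) powr (1 - q) * b powr q + (c / s) powr (1 - q) * c powr q"
    using U V W by (intro add_mono mult_left_mono) auto
  also have "\<dots> = s powr (q - 1) * s"
    using pos s by (simp add: powr_weight_id s_def distrib_left)
  also have "\<dots> = s powr q" using s by (simp add: powr_diff)
  finally show ?thesis by (simp add: s_def)
qed

lemma three_zero:
  fixes F u v w :: "'b \<Rightarrow> real" and q :: real
  assumes I: "finite I" and q: "q \<ge> 1"
    and pt: "\<And>i. i \<in> I \<Longrightarrow> F i \<le> u i + v i + w i"
    and nn: "\<And>i. i \<in> I \<Longrightarrow> F i \<ge> 0 \<and> u i \<ge> 0 \<and> v i \<ge> 0 \<and> w i \<ge> 0"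
    and U: "(\<Sum>i\<in>I. u i powr q) \<le> 0" and V: "(\<Sum>i\<in>I. v i powr q) \<le> 0"
    and W: "(\<Sum>i\<in>I. w i powr q) \<le> 0"
  shows "(\<Sum>i\<in>I. F i powr q) \<le> 0"
proof -
  have "F i powr q \<le> 3 powr (q - 1) * (u i powr q + v i powr q + w i powr q)" if i: "i \<in> I" for i
  proof -
    have "F i powr q \<le> (u i + v i + w i) powr q" using pt[OF i] nn[OF i] q by (intro powr_mono2) auto
    also have "\<dots> = (\<Sum>j\<in>{0::nat,1,2}. (if j = 0 then u i else if j = 1 then v i else w i)) powr q" by (simp add: add.assoc)
    also have "\<dots> \<le> real (card {0::nat,1,2}) powr (q - 1) * (\<Sum>j\<in>{0::nat,1,2}. (if j = 0 then u i else if j = 1 then v i else w i) powr q)"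
      using nn[OF i] q by (intro power_mean_card) auto
    also have "\<dots> = 3 powr (q - 1) * (u i powr q + v i powr q + w i powr q)" by simp
    finally show ?thesis .
  qed
  hence "(\<Sum>i\<in>I. F i powr q) \<le> (\<Sum>i\<in>I. 3 powr (q - 1) * (u i powr q + v i powr q + w i powr q))"
    by (intro sum_mono)
  also have "\<dots> = 3 powr (q - 1) * ((\<Sum>i\<in>I. u i powr q) + (\<Sum>i\<in>I. v i powr q) + (\<Sum>i\<in>I. w i powr q))"
    by (simp only: sum.distrib sum_distrib_left distrib_left)
  also have "\<dots> \<le> 0" using U V W by (intro mult_nonneg_nonpos) auto
  finally show ?thesis .
qed

locale cot =
  fixes q \<beta> :: real and B :: "'a::metric_space pmf \<Rightarrow> 'a"
    and n m :: nat and f :: "(nat \<Rightarrow> int) \<Rightarrow> 'a"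
  assumes q1: "q \<ge> 1" and b1: "\<beta> \<ge> 1" and bary: "q_barycentric q \<beta> B"
    and n1: "n \<ge> 1" and m0: "m > 0" and ev: "even m"
begin

definition "M = 2 * int m"
definition "T = torus n M"
definition "S = signs n"

lemma M_pos: "M > 0" using m0 by (simp add: M_def)

primrec Phi :: "nat \<Rightarrow> (nat \<Rightarrow> int) \<Rightarrow> 'a" where
  "Phi 0 = f"
| "Phi (Suc j) = (\<lambda>y. B (map_pmf (\<lambda>s. Phi j (tadd n M y (sv (n - Suc j) s))) (pmf_of_set {-1,1})))"

definition "psi k = Phi (n - k)"

definition "mu k y = map_pmf (\<lambda>s. psi (Suc k) (tadd n M y (sv k s))) (pmf_of_set {-1,1})"

lemma psi_n: "psi n = f" by (simp add: psi_def)

lemma psi_step: "k < n \<Longrightarrow> psi k y = B (mu k y)"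
proof -
  assume k: "k < n"
  have "n - k = Suc (n - Suc k)" using k by simp
  moreover have "n - Suc (n - Suc k) = k" using k by simp
  ultimately show ?thesis by (simp add: psi_def mu_def)
qed

lemma exp_mu: fixes h :: "'a \<Rightarrow> real" shows "measure_pmf.expectation (mu k y) h = (\<Sum>s\<in>{-1,1}. h (psi (Suc k) (tadd n M y (sv k s)))) / 2"
  by (simp add: mu_def integral_pmf_of_set)

lemma finite_mu: "finite (set_pmf (mu k y))"
  by (simp add: mu_def)

lemma bary_step:
  assumes "k < n"
  shows "dist z (psi k y) powr q + \<beta> powr (-q) * ((\<Sum>s\<in>{-1,1}. dist (psi k y) (psi (Suc k) (tadd n M y (sv k s))) powr q) / 2)
     \<le> (\<Sum>s\<in>{-1,1}. dist z (psi (Suc k) (tadd n M y (sv k s))) powr q) / 2"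
proof -
  have "dist (B (mu k y)) z powr q + \<beta> powr (-q) * measure_pmf.expectation (mu k y) (\<lambda>w. dist (B (mu k y)) w powr q)
      \<le> measure_pmf.expectation (mu k y) (\<lambda>w. dist z w powr q)"
    using bary finite_mu[of k y] unfolding q_barycentric_def by blast
  thus ?thesis unfolding psi_step[OF assms] exp_mu by (simp add: dist_commute)
qed


definition "Af k = (\<Sum>x\<in>T. \<Sum>e\<in>S. dist (f x) (psi k (tadd n M x (trunc k e))) powr q)"
definition "Dp k = (\<Sum>y\<in>T. (\<Sum>s\<in>{-1,1}. dist (psi k y) (psi (Suc k) (tadd n M y (sv k s))) powr q) / 2)"

lemma Af_nonneg: "Af k \<ge> 0" unfolding Af_def by (intro sum_nonneg) auto
lemma Dp_nonneg: "Dp k \<ge> 0" unfolding Dp_def by (intro sum_nonneg divide_nonneg_pos) auto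

lemma shiftT: "(\<Sum>x\<in>T. g (tadd n M x v)) = (\<Sum>x\<in>T. g x)"
  unfolding T_def by (rule sum_torus_shift[OF M_pos])

lemma rec_step:
  assumes k: "k < n"
  shows "Af k + \<beta> powr (-q) * (real (card S) * Dp k) \<le> Af (Suc k)"
proof -
  let ?H = "\<lambda>y. (\<Sum>s\<in>{-1,1}. dist (psi k y) (psi (Suc k) (tadd n M y (sv k s))) powr q) / 2"
  let ?G = "\<lambda>x v. dist (f x) (psi (Suc k) (tadd n M x v)) powr q"
  have pt: "dist (f x) (psi k (tadd n M x (trunc k e))) powr q + \<beta> powr (-q) * ?H (tadd n M x (trunc k e))
      \<le> (\<Sum>s\<in>{-1,1}. ?G x (\<lambda>i. trunc k e i + sv k s i)) / 2" for x e
    using bary_step[OF k, of "f x" "tadd n M x (trunc k e)"] by (simp add: tadd_tadd)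
  have "(\<Sum>x\<in>T. \<Sum>e\<in>S. dist (f x) (psi k (tadd n M x (trunc k e))) powr q + \<beta> powr (-q) * ?H (tadd n M x (trunc k e)))
     \<le> (\<Sum>x\<in>T. \<Sum>e\<in>S. (\<Sum>s\<in>{-1,1}. ?G x (\<lambda>i. trunc k e i + sv k s i)) / 2)"
    by (intro sum_mono pt)
  also have "\<dots> = (\<Sum>x\<in>T. \<Sum>e\<in>S. ?G x (trunc (Suc k) e))"
    unfolding S_def by (intro sum.cong refl signs_flip_sum[OF k])
  also have "\<dots> = Af (Suc k)" by (simp add: Af_def)
  finally have 1: "(\<Sum>x\<in>T. \<Sum>e\<in>S. dist (f x) (psi k (tadd n M x (trunc k e))) powr q + \<beta> powr (-q) * ?H (tadd n M x (trunc k e))) \<le> Af (Suc k)" .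
  have "(\<Sum>x\<in>T. \<Sum>e\<in>S. ?H (tadd n M x (trunc k e))) = (\<Sum>e\<in>S. \<Sum>x\<in>T. ?H (tadd n M x (trunc k e)))"
    by (rule sum.swap)
  also have "\<dots> = (\<Sum>e\<in>S. Dp k)" unfolding Dp_def by (intro sum.cong refl shiftT)
  also have "\<dots> = real (card S) * Dp k" by simp
  finally have 2: "(\<Sum>x\<in>T. \<Sum>e\<in>S. ?H (tadd n M x (trunc k e))) = real (card S) * Dp k" .
  have "(\<Sum>x\<in>T. \<Sum>e\<in>S. dist (f x) (psi k (tadd n M x (trunc k e))) powr q + \<beta> powr (-q) * ?H (tadd n M x (trunc k e)))
     = Af k + \<beta> powr (-q) * (\<Sum>x\<in>T. \<Sum>e\<in>S. ?H (tadd n M x (trunc k e)))"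
    by (simp add: Af_def sum.distrib sum_distrib_left)
  thus ?thesis using 1 2 by simp
qed

lemma Af_mono: "k \<le> j \<Longrightarrow> j \<le> n \<Longrightarrow> Af k \<le> Af j"
proof (induction j rule: dec_induct)
  case (step j)
  have "\<beta> powr (-q) * (real (card S) * Dp j) \<ge> 0" using Dp_nonneg by simp
  thus ?case using rec_step[of j] step by simp
qed simp

lemma sum_Dp: "real (card S) * (\<Sum>k<n. Dp k) \<le> \<beta> powr q * Af n"
proof -
  have bq: "\<beta> powr q > 0" using b1 by simp
  have "real (card S) * Dp k \<le> \<beta> powr q * (Af (Suc k) - Af k)" if "k < n" for k
  proof -
    have "\<beta> powr (-q) * (real (card S) * Dp k) \<le> Af (Suc k) - Af k" using rec_step[OF that] by simp
    hence "\<beta> powr q * (\<beta> powr (-q) * (real (card S) * Dp k)) \<le> \<beta> powr q * (Af (Suc k) - Af k)"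
      using bq by (intro mult_left_mono) auto
    moreover have "\<beta> powr q * \<beta> powr (-q) = 1" using b1 by (simp add: powr_minus)
    ultimately show ?thesis by (simp add: mult.assoc[symmetric])
  qed
  hence "(\<Sum>k<n. real (card S) * Dp k) \<le> (\<Sum>k<n. \<beta> powr q * (Af (Suc k) - Af k))"
    by (intro sum_mono) auto
  also have "\<dots> = \<beta> powr q * (Af n - Af 0)"
    by (simp add: sum_distrib_left[symmetric] sum_lessThan_telescope)
  also have "\<dots> \<le> \<beta> powr q * Af n" using bq Af_nonneg[of 0] by (intro mult_left_mono) auto
  finally show ?thesis by (simp add: sum_distrib_left)
qed


lemma pow2: "a \<ge> 0 \<Longrightarrow> b \<ge> 0 \<Longrightarrow> (a + b) powr q \<le> 2 powr (q - 1) * (a powr q + b powr q)"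
  using power_mean_card[of "{0::nat,1}" q "\<lambda>j. if j = 0 then a else b"] q1 by simp

lemma sv_add: "(\<lambda>i. sv k a i + sv k b i) = sv k (a + b)"
  by (auto simp: sv_def fun_eq_iff)

lemma chain_tri:
  assumes y: "y \<in> T"
  shows "dist (psi (Suc k) y) (psi (Suc k) (tadd n M y (sv k (2 * int j))))
     \<le> (\<Sum>i<j. dist (psi (Suc k) (tadd n M y (sv k (2 * int i)))) (psi (Suc k) (tadd n M y (sv k (2 * int (Suc i))))))"
proof (induction j)
  case 0
  have "tadd n M y (sv k 0) = y" using y unfolding T_def by (intro tadd_id) (auto simp: sv_def)
  thus ?case by simp
next
  case (Suc j)
  thus ?case using dist_triangle[of "psi (Suc k) y" "psi (Suc k) (tadd n M y (sv k (2 * int (Suc j))))" "psi (Suc k) (tadd n M y (sv k (2 * int j)))"]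
    by simp
qed

lemma step2: "(\<Sum>y\<in>T. dist (psi (Suc k) y) (psi (Suc k) (tadd n M y (sv k 2))) powr q) \<le> 2 powr q * Dp k"
proof -
  let ?P = "psi (Suc k)"
  let ?a = "\<lambda>y. dist (?P y) (psi k (tadd n M y (sv k 1)))"
  let ?b = "\<lambda>y. dist (psi k (tadd n M y (sv k 1))) (?P (tadd n M (tadd n M y (sv k 1)) (sv k 1)))"
  have e2: "tadd n M (tadd n M y (sv k 1)) (sv k 1) = tadd n M y (sv k 2)" for y
    unfolding tadd_tadd sv_add by simp
  have pt: "dist (?P y) (?P (tadd n M y (sv k 2))) powr q \<le> 2 powr (q - 1) * (?a y powr q + ?b y powr q)" for y
  proof -
    have "dist (?P y) (?P (tadd n M y (sv k 2))) \<le> ?a y + ?b y"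
      unfolding e2 by (rule dist_triangle)
    hence "dist (?P y) (?P (tadd n M y (sv k 2))) powr q \<le> (?a y + ?b y) powr q"
      using q1 by (intro powr_mono2) auto
    also have "\<dots> \<le> 2 powr (q - 1) * (?a y powr q + ?b y powr q)" by (intro pow2) auto
    finally show ?thesis .
  qed
  have sa: "(\<Sum>y\<in>T. ?a y powr q) = (\<Sum>w\<in>T. dist (psi k w) (?P (tadd n M w (sv k (-1)))) powr q)"
  proof -
    have "(\<Sum>y\<in>T. ?a y powr q) = (\<Sum>y\<in>T. (\<lambda>w. dist (psi k w) (?P (tadd n M w (sv k (-1)))) powr q) (tadd n M y (sv k 1)))"
    proof (intro sum.cong refl)
      fix y assume "y \<in> T"
      hence "tadd n M (tadd n M y (sv k 1)) (sv k (-1)) = y"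
        unfolding T_def tadd_tadd sv_add by (intro tadd_id) (auto simp: sv_def)
      thus "?a y powr q = (\<lambda>w. dist (psi k w) (?P (tadd n M w (sv k (-1)))) powr q) (tadd n M y (sv k 1))"
        by (simp add: dist_commute)
    qed
    also have "\<dots> = (\<Sum>w\<in>T. dist (psi k w) (?P (tadd n M w (sv k (-1)))) powr q)" by (rule shiftT)
    finally show ?thesis .
  qed
  have sb: "(\<Sum>y\<in>T. ?b y powr q) = (\<Sum>w\<in>T. dist (psi k w) (?P (tadd n M w (sv k 1))) powr q)"
    using shiftT[of "\<lambda>w. dist (psi k w) (?P (tadd n M w (sv k 1))) powr q" "sv k 1"] by simp
  have "(\<Sum>y\<in>T. dist (?P y) (?P (tadd n M y (sv k 2))) powr q) \<le> (\<Sum>y\<in>T. 2 powr (q - 1) * (?a y powr q + ?b y powr q))"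
    by (intro sum_mono pt)
  also have "\<dots> = 2 powr (q - 1) * ((\<Sum>y\<in>T. ?a y powr q) + (\<Sum>y\<in>T. ?b y powr q))"
    by (simp only: sum_distrib_left distrib_left sum.distrib)
  also have "(\<Sum>y\<in>T. ?a y powr q) + (\<Sum>y\<in>T. ?b y powr q) = 2 * Dp k"
    unfolding sa sb Dp_def by (simp add: sum.distrib sum_divide_distrib[symmetric] add.commute)
  also have "2 powr (q - 1) * (2 * Dp k) = 2 powr q * Dp k"
    by (simp add: powr_diff)
  finally show ?thesis .
qed

lemma Vbound:
  "(\<Sum>y\<in>T. dist (psi (Suc k) y) (psi (Suc k) (tadd n M y (sv k (int m)))) powr q) \<le> real m powr q * Dp k"
proof -
  let ?P = "psi (Suc k)"
  define N where "N = m div 2"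
  have mN: "int m = 2 * int N" "real m = 2 * real N" using ev unfolding N_def by auto
  have N1: "N \<ge> 1" using m0 ev unfolding N_def by auto
  let ?a = "\<lambda>i y. dist (?P (tadd n M y (sv k (2 * int i)))) (?P (tadd n M y (sv k (2 * int (Suc i)))))"
  have W: "(\<Sum>y\<in>T. ?a i y powr q) \<le> 2 powr q * Dp k" for i
  proof -
    have "(\<Sum>y\<in>T. ?a i y powr q) = (\<Sum>y\<in>T. (\<lambda>w. dist (?P w) (?P (tadd n M w (sv k 2))) powr q) (tadd n M y (sv k (2 * int i))))"
      by (simp add: tadd_tadd sv_add add.commute)
    also have "\<dots> = (\<Sum>w\<in>T. dist (?P w) (?P (tadd n M w (sv k 2))) powr q)" by (rule shiftT)
    finally show ?thesis using step2[of k] by simp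
  qed
  have "(\<Sum>y\<in>T. dist (?P y) (?P (tadd n M y (sv k (int m)))) powr q) \<le> (\<Sum>y\<in>T. real N powr (q - 1) * (\<Sum>i<N. ?a i y powr q))"
  proof (intro sum_mono)
    fix y assume y: "y \<in> T"
    have "dist (?P y) (?P (tadd n M y (sv k (int m)))) powr q \<le> (\<Sum>i<N. ?a i y) powr q"
      unfolding mN(1) using chain_tri[OF y, of k N] q1 by (intro powr_mono2) auto
    also have "\<dots> \<le> real N powr (q - 1) * (\<Sum>i<N. ?a i y powr q)"
      using power_mean_card[of "{..<N}" q "\<lambda>i. ?a i y"] q1 N1 by (auto simp: lessThan_empty_iff)
    finally show "dist (?P y) (?P (tadd n M y (sv k (int m)))) powr q \<le> real N powr (q - 1) * (\<Sum>i<N. ?a i y powr q)" .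
  qed
  also have "\<dots> = real N powr (q - 1) * (\<Sum>i<N. \<Sum>y\<in>T. ?a i y powr q)"
    by (simp add: sum_distrib_left sum.swap[of _ T])
  also have "\<dots> \<le> real N powr (q - 1) * (\<Sum>i<N. 2 powr q * Dp k)"
    by (intro mult_left_mono sum_mono W) auto
  also have "\<dots> = real N powr (q - 1) * real N * 2 powr q * Dp k" by simp
  also have "real N powr (q - 1) * real N = real N powr q"
    using N1 by (simp add: powr_diff)
  also have "real N powr q * 2 powr q = real m powr q"
    unfolding mN(2) by (simp add: powr_mult)
  finally show ?thesis .
qed


lemma unit_sv: "(\<lambda>j. int m * unitvec i j) = sv i (int m)"
  by (auto simp: unitvec_def sv_def fun_eq_iff)

lemma sum3: "(\<Sum>p\<in>A \<times> B' \<times> C. g p) = (\<Sum>k\<in>A. \<Sum>x\<in>B'. \<Sum>e\<in>C. (g (k,x,e) :: real))"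
  by (simp add: sum.cartesian_product)

lemma finT: "finite T" unfolding T_def by (rule finite_torus)
lemma finS: "finite S" unfolding S_def by (rule finite_signs)
lemma cardS: "card S = 2 ^ n" unfolding S_def by (rule card_signs)

lemma main_ineq:
  defines "Lsum \<equiv> (\<Sum>i<n. \<Sum>x\<in>T. dist (f (tadd n M x (\<lambda>j. int m * unitvec i j))) (f x) powr q)"
  defines "Rsum \<equiv> (\<Sum>e\<in>S. \<Sum>x\<in>T. dist (f (tadd n M x e)) (f x) powr q)"
  shows "Lsum powr (1/q) \<le> (2 * real n powr (1/q) + \<beta> * real m) * ((1 / 2 ^ n) * Rsum) powr (1/q)"
proof -
  let ?I = "{..<n} \<times> T \<times> S"
  let ?P = "\<lambda>k. psi (Suc k)"
  let ?y = "\<lambda>k x e. tadd n M x (trunc (Suc k) e)"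
  let ?x' = "\<lambda>k x. tadd n M x (sv k (int m))"
  define F where "F = (\<lambda>(k,x,e::nat\<Rightarrow>int). dist (f (?x' k x)) (f x))"
  define u where "u = (\<lambda>(k,x,e). dist (f x) (?P k (?y k x e)))"
  define v where "v = (\<lambda>(k,x,e). dist (?P k (?y k x e)) (?P k (tadd n M (?y k x e) (sv k (int m)))))"
  define w where "w = (\<lambda>(k,x,e). dist (?P k (tadd n M (?y k x e) (sv k (int m)))) (f (?x' k x)))"
  have finI: "finite ?I" using finT finS by auto
  have c: "real (card S) = 2 ^ n" using cardS by simp
  have AR: "Af n = Rsum"
  proof -
    have tr: "tadd n M x (trunc n e) = tadd n M x e" for x e by (rule tadd_cong) (simp add: trunc_def)
    have "Af n = (\<Sum>x\<in>T. \<Sum>e\<in>S. dist (f (tadd n M x e)) (f x) powr q)"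
      unfolding Af_def psi_n tr by (simp add: dist_commute)
    also have "\<dots> = Rsum" unfolding Rsum_def by (rule sum.swap)
    finally show ?thesis .
  qed
  have pt: "F p \<le> u p + v p + w p" for p
  proof -
    obtain k x e where p: "p = (k, x, e)" by (cases p) auto
    have "dist (f (?x' k x)) (f x) \<le> dist (f x) (?P k (?y k x e)) + dist (?P k (?y k x e)) (f (?x' k x))"
      by (subst dist_commute) (rule dist_triangle)
    also have "dist (?P k (?y k x e)) (f (?x' k x)) \<le> dist (?P k (?y k x e)) (?P k (tadd n M (?y k x e) (sv k (int m))))
        + dist (?P k (tadd n M (?y k x e) (sv k (int m)))) (f (?x' k x))"
      by (rule dist_triangle)
    finally show ?thesis by (simp add: p F_def u_def v_def w_def)
  qed
  have nn: "F p \<ge> 0 \<and> u p \<ge> 0 \<and> v p \<ge> 0 \<and> w p \<ge> 0" for p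
    by (cases p) (simp add: F_def u_def v_def w_def)
  have SF: "(\<Sum>p\<in>?I. F p powr q) = real (card S) * Lsum"
    unfolding sum3 F_def prod.case Lsum_def unit_sv by (simp add: sum_distrib_left)
  have SU: "(\<Sum>p\<in>?I. u p powr q) \<le> real n * Af n"
  proof -
    have "(\<Sum>p\<in>?I. u p powr q) = (\<Sum>k<n. Af (Suc k))"
      unfolding sum3 u_def prod.case Af_def by (simp add: sum.swap[of _ T])
    also have "\<dots> \<le> (\<Sum>k<n. Af n)" by (intro sum_mono Af_mono) auto
    finally show ?thesis by simp
  qed
  have SW: "(\<Sum>p\<in>?I. w p powr q) \<le> real n * Af n"
  proof -
    have "(\<Sum>p\<in>?I. w p powr q) = (\<Sum>k<n. Af (Suc k))"
    proof -
      have "(\<Sum>p\<in>?I. w p powr q) = (\<Sum>k<n. \<Sum>x\<in>T. (\<lambda>x'. \<Sum>e\<in>S. dist (f x') (?P k (tadd n M x' (trunc (Suc k) e))) powr q) (?x' k x))"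
        unfolding sum3 w_def prod.case
        by (intro sum.cong refl) (simp add: tadd_tadd add.commute dist_commute)
      also have "\<dots> = (\<Sum>k<n. Af (Suc k))"
        unfolding Af_def by (intro sum.cong refl shiftT)
      finally show ?thesis .
    qed
    also have "\<dots> \<le> (\<Sum>k<n. Af n)" by (intro sum_mono Af_mono) auto
    finally show ?thesis by simp
  qed
  have SV: "(\<Sum>p\<in>?I. v p powr q) \<le> real m powr q * \<beta> powr q * Af n"
  proof -
    have "(\<Sum>p\<in>?I. v p powr q) = (\<Sum>k<n. \<Sum>e\<in>S. \<Sum>x\<in>T. (\<lambda>y. dist (?P k y) (?P k (tadd n M y (sv k (int m)))) powr q) (?y k x e))"
      unfolding sum3 v_def prod.case by (rule sum.cong[OF refl], rule sum.swap)
    also have "\<dots> = (\<Sum>k<n. \<Sum>e\<in>S. \<Sum>y\<in>T. dist (?P k y) (?P k (tadd n M y (sv k (int m)))) powr q)"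
      by (intro sum.cong refl shiftT)
    also have "\<dots> = (\<Sum>k<n. real (card S) * (\<Sum>y\<in>T. dist (?P k y) (?P k (tadd n M y (sv k (int m)))) powr q))"
      by simp
    also have "\<dots> \<le> (\<Sum>k<n. real (card S) * (real m powr q * Dp k))"
      by (intro sum_mono mult_left_mono Vbound) auto
    also have "\<dots> = real m powr q * (real (card S) * (\<Sum>k<n. Dp k))"
      by (simp add: sum_distrib_left mult_ac)
    also have "\<dots> \<le> real m powr q * (\<beta> powr q * Af n)"
      by (intro mult_left_mono sum_Dp) auto
    finally show ?thesis by simp
  qed
  define K where "K = 2 * real n powr (1/q) + \<beta> * real m"
  have K0: "K \<ge> 0" using b1 by (simp add: K_def)
  have q0: "q > 0" using q1 by simp
  have Lnn: "Lsum \<ge> 0" unfolding Lsum_def by (intro sum_nonneg) auto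
  have key: "real (card S) * Lsum \<le> K powr q * Af n"
  proof (cases "Af n > 0")
    case True
    let ?X = "Af n powr (1/q)"
    have X: "?X > 0" "?X powr q = Af n" using True q0 by (auto simp: powr_powr)
    have a: "(real n powr (1/q) * ?X) powr q = real n * Af n"
      using X q0 by (simp add: powr_mult powr_powr)
    have b: "(real m * \<beta> * ?X) powr q = real m powr q * \<beta> powr q * Af n"
      using X q0 b1 by (simp add: powr_mult)
    have "(\<Sum>p\<in>?I. F p powr q) \<le> (real n powr (1/q) * ?X + real m * \<beta> * ?X + real n powr (1/q) * ?X) powr q"
      using n1 m0 b1 X
      by (intro three_mink[OF finI q1 pt nn]) (auto simp: a b SU SV SW)
    also have "real n powr (1/q) * ?X + real m * \<beta> * ?X + real n powr (1/q) * ?X = K * ?X"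
      by (simp add: K_def algebra_simps)
    also have "(K * ?X) powr q = K powr q * Af n" using K0 X by (simp add: powr_mult)
    finally show ?thesis using SF by simp
  next
    case False
    hence A0: "Af n = 0" using Af_nonneg[of n] by simp
    have "(\<Sum>p\<in>?I. F p powr q) \<le> 0"
      by (intro three_zero[OF finI q1 pt nn]) (use SU SV SW A0 in auto)
    thus ?thesis using SF A0 by simp
  qed
  have "Lsum \<le> K powr q * ((1 / 2 ^ n) * Rsum)"
    using key c AR by (simp add: field_simps)
  hence "Lsum powr (1/q) \<le> (K powr q * ((1 / 2 ^ n) * Rsum)) powr (1/q)"
    using Lnn q0 by (intro powr_mono2) auto
  also have "\<dots> = K * ((1 / 2 ^ n) * Rsum) powr (1/q)"
  proof -
    have Y: "(1 / 2 ^ n) * Rsum \<ge> 0" using AR Af_nonneg[of n] by simp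
    have "(K powr q * ((1 / 2 ^ n) * Rsum)) powr (1/q) = (K powr q) powr (1/q) * ((1 / 2 ^ n) * Rsum) powr (1/q)"
      using Y powr_mult[of "K powr q" "(1 / 2 ^ n) * Rsum" "1/q"] by simp
    also have "(K powr q) powr (1/q) = K" using K0 q0 by (simp add: powr_powr)
    finally show ?thesis .
  qed
  finally show ?thesis unfolding K_def .
qed

end

theorem theorem1p4:
  fixes q \<beta> :: real and B :: "'a::metric_space pmf \<Rightarrow> 'a"
    and n m :: nat and f :: "(nat \<Rightarrow> int) \<Rightarrow> 'a"
  assumes "q \<ge> 1" and "\<beta> \<ge> 1" and "q_barycentric q \<beta> B"
    and "n \<ge> 1" and "m > 0" and "even m"
  shows "(let M = 2 * int m;
              L = (\<Sum>i<n. \<Sum>x\<in>torus n M. dist (f (tadd n M x (\<lambda>j. int m * unitvec i j))) (f x) powr q) powr (1/q);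
              R = ((1 / 2 ^ n) * (\<Sum>\<epsilon>\<in>signs n. \<Sum>x\<in>torus n M. dist (f (tadd n M x \<epsilon>)) (f x) powr q)) powr (1/q)
          in L \<le> (4 * real n powr (1/q) + \<beta> * real m) * R
             \<and> (real m \<ge> real n powr (1/q) / \<beta> \<longrightarrow> L \<le> 5 * \<beta> * real m * R))"
  proof -
  interpret cot q \<beta> B n m f using assms by unfold_locales
  define L where "L = (\<Sum>i<n. \<Sum>x\<in>torus n (2 * int m). dist (f (tadd n (2 * int m) x (\<lambda>j. int m * unitvec i j))) (f x) powr q) powr (1/q)"
  define R where "R = ((1 / 2 ^ n) * (\<Sum>\<epsilon>\<in>signs n. \<Sum>x\<in>torus n (2 * int m). dist (f (tadd n (2 * int m) x \<epsilon>)) (f x) powr q)) powr (1/q)"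
  have main: "L \<le> (2 * real n powr (1/q) + \<beta> * real m) * R"
    using main_ineq unfolding L_def R_def T_def S_def M_def .
  have R0: "R \<ge> 0" unfolding R_def by simp
  have n0: "real n powr (1/q) \<ge> 0" by simp
  have 1: "L \<le> (4 * real n powr (1/q) + \<beta> * real m) * R"
  proof -
    have "(2 * real n powr (1/q) + \<beta> * real m) * R \<le> (4 * real n powr (1/q) + \<beta> * real m) * R"
      using R0 n0 by (intro mult_right_mono) auto
    thus ?thesis using main by simp
  qed
  have 2: "L \<le> 5 * \<beta> * real m * R" if h: "real m \<ge> real n powr (1/q) / \<beta>"
  proof -
    have "real n powr (1/q) \<le> \<beta> * real m" using h assms(2) by (simp add: field_simps)
    hence "(4 * real n powr (1/q) + \<beta> * real m) * R \<le> (5 * \<beta> * real m) * R"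
      using R0 by (intro mult_right_mono) auto
    thus ?thesis using 1 by simp
  qed
  show ?thesis unfolding Let_def using 1 2 unfolding L_def R_def by blast
qed

end
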